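(* For every integer $n\ge1$, $$\frac{\sqrt{12}\,e^{\mu(n)}}{24n-1}\left(1-\frac{1}{\mu(n)}\right)=\frac{e^{\pi\sqrt{2n/3}}}{4n\sqrt3}\sum_{t=0}^\infty \frac{g(t)}{n^{t/2}},$$ where $\mu(n)=\frac{\pi}{6}\sqrt{24n-1}$ and $$g(t)=\frac{1}{(-4\sqrt6)^t}\sum_{k=0}^{\lfloor (t+1)/2\rfloor}\binom{t+1}{k}\frac{t+1-k}{(t+1-2k)!}\left(\frac{\pi}{6}\right)^{t-2k}.$$ *)

theory Defs
  imports "HOL-Analysis.Analysis"
begin

definition mu :: "nat \<Rightarrow> real" where
  "mu n = pi / 6 * sqrt (24 * real n - 1)"

definition gcoef :: "nat \<Rightarrow> real" where
  "gcoef t = (1 / (- 4 * sqrt 6) ^ t) *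
     (\<Sum>k = 0..(t + 1) div 2.
        real ((t + 1) choose k) * (real (t + 1 - k) / fact (t + 1 - 2 * k)) * (pi / 6) powi (int t - 2 * int k))"

end

theory Submission
  imports Defs "HOL-Analysis.Analysis"
begin


lemma aux_cb: fixes c1 c0 a f g k :: real
  assumes "c1 = (a + 2) * (a+1) * f / ((k + 1) * g * ((k + 1) * g))" "c0 = f / (g*g)" "g > 0" "k+1>0"
  shows "a = 2*k \<Longrightarrow> c1 * (k+1) = 2*(2*k+1)*c0"
proof -
  assume a: "a = 2*k"
  have "c1 = (2 * (a+1) * (f / (g*g))) * ((k+1) / ((k+1)*(k+1)))" using assms(1) a by (simp add: field_simps)
  also have "(k+1) / ((k+1)*(k+1)) = 1/(k+1)" using assms(4) by simp
  finally show ?thesis using assms(2,4) a by simp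
qed

lemma aux_h1: fixes c1 c0 G k :: real assumes "c1 * (1 + k) = 2*(2*k+1)*c0" "G = c0" "k \<ge> 0"
  shows "2 * (2 * k + 1) / (1 + k) * G = c1"
proof -
  have "1 + k \<noteq> 0" using assms by simp
  thus ?thesis using assms by (simp add: field_simps)
qed

lemma aux_h3: fixes c1 c0 G k :: real assumes "c1 * (1 + k) = 2*(2*k+1)*c0" "G = (2*k+1)*c0" "k \<ge> 0"
  shows "2 * (2 * k + 3) / (1 + k) * G = (2*(1+k)+1) * c1"
proof -
  have "1 + k \<noteq> 0" using assms by simp
  hence c: "c1 = 2*(2*k+1)*c0 / (1+k)" using assms(1) by (simp add: field_simps)
  show ?thesis unfolding c assms(2) using \<open>1 + k \<noteq> 0\<close> by (simp add: field_simps)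
qed

lemma gch_half: "((-1/2::real) gchoose k) * (-4)^k = real ((2*k) choose k)"
proof (induction k)
  case 0 then show ?case by simp
next
  case (Suc k)
  have r: "((-1/2::real) gchoose Suc k) = ((-1/2) - real k) * ((-1/2) gchoose k) / real (Suc k)"
    using gbinomial_mult_1[of "-1/2::real" k] by (simp add: field_simps)
  have b: "real ((2*Suc k) choose Suc k) * real (Suc k) = 2 * (2 * real k + 1) * real ((2*k) choose k)"
  proof -
    have e: "2*Suc k - Suc k = Suc k" "2*k-k = k" by simp_all
    have "real ((2*Suc k) choose Suc k) = fact (2*Suc k) / (fact (Suc k) * fact (Suc k))"
      using binomial_fact[of "Suc k" "2*Suc k", where 'a=real] e by simp
    also have "fact (2*Suc k) = (real (2*k) + 2) * (real (2*k)+1) * (fact (2*k) :: real)"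
      by (simp add: fact_Suc algebra_simps del: of_nat_mult)
    finally have 1: "real ((2*Suc k) choose Suc k) = (real (2*k) + 2) * (real (2*k)+1) * fact (2*k) / (fact (Suc k) * fact (Suc k))" .
    have 2: "real ((2*k) choose k) = fact (2*k) / (fact k * fact k)"
      using binomial_fact[of "k" "2*k", where 'a=real] e by simp
    have p: "(fact k::real) > 0" "real k + 1 > 0" by simp_all
    have "real ((2*Suc k) choose Suc k) = (real (2*k) + 2) * (real (2*k)+1) * fact (2*k) / ((real k + 1) * fact k * ((real k + 1) * fact k))"
      unfolding 1 by (simp add: fact_Suc algebra_simps)
    from aux_cb[OF this 2 p] show ?thesis by (simp only: of_nat_Suc add.commute of_nat_mult of_nat_numeral)
  qed
  have "((-1/2::real) gchoose Suc k) * (-4)^Suc k = (2 * (2 * real k + 1) / real (Suc k)) * (((-1/2) gchoose k) * (-4)^k)"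
    by (subst r) (simp add: field_simps)
  also have "\<dots> = real ((2*Suc k) choose Suc k)" using aux_h1[OF b[unfolded of_nat_Suc] Suc.IH] by simp
  finally show ?case .
qed

lemma gch_3half: "((-3/2::real) gchoose k) * (-4)^k = (2*real k+1) * real ((2*k) choose k)"
proof (induction k)
  case 0 then show ?case by simp
next
  case (Suc k)
  have r: "((-3/2::real) gchoose Suc k) = ((-3/2) - real k) * ((-3/2) gchoose k) / real (Suc k)"
    using gbinomial_mult_1[of "-3/2::real" k] by (simp add: field_simps)
  have b: "real ((2*Suc k) choose Suc k) * real (Suc k) = 2 * (2 * real k + 1) * real ((2*k) choose k)"
  proof -
    have e: "2*Suc k - Suc k = Suc k" "2*k-k = k" by simp_all
    have "real ((2*Suc k) choose Suc k) = fact (2*Suc k) / (fact (Suc k) * fact (Suc k))"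
      using binomial_fact[of "Suc k" "2*Suc k", where 'a=real] e by simp
    also have "fact (2*Suc k) = (real (2*k) + 2) * (real (2*k)+1) * (fact (2*k) :: real)"
      by (simp add: fact_Suc algebra_simps del: of_nat_mult)
    finally have 1: "real ((2*Suc k) choose Suc k) = (real (2*k) + 2) * (real (2*k)+1) * fact (2*k) / (fact (Suc k) * fact (Suc k))" .
    have 2: "real ((2*k) choose k) = fact (2*k) / (fact k * fact k)"
      using binomial_fact[of "k" "2*k", where 'a=real] e by simp
    have p: "(fact k::real) > 0" "real k + 1 > 0" by simp_all
    have "real ((2*Suc k) choose Suc k) = (real (2*k) + 2) * (real (2*k)+1) * fact (2*k) / ((real k + 1) * fact k * ((real k + 1) * fact k))"
      unfolding 1 by (simp add: fact_Suc algebra_simps)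
    from aux_cb[OF this 2 p] show ?thesis by (simp only: of_nat_Suc add.commute of_nat_mult of_nat_numeral)
  qed
  have "((-3/2::real) gchoose Suc k) * (-4)^Suc k = (2 * (2 * real k + 3) / real (Suc k)) * (((-3/2) gchoose k) * (-4)^k)"
    by (subst r) (simp add: field_simps)
  also have "\<dots> = (2*real (Suc k)+1) * real ((2*Suc k) choose Suc k)" using aux_h3[OF b[unfolded of_nat_Suc] Suc.IH] by simp
  finally show ?case .
qed

lemma powr_half_aux: fixes s :: real assumes "0 < s"
  shows "(s^2) powr (-1/2) = 1/s" "(s^2) powr (-3/2) = 1/s^3"
proof -
  have e: "s^2 = s powr 2" using assms by (simp add: powr_realpow)
  have "(s^2) powr (-1/2) = s powr (-1)" unfolding e by (simp add: powr_powr)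
  also have "\<dots> = 1/s" using assms by (simp add: powr_minus divide_inverse)
  finally show "(s^2) powr (-1/2) = 1/s" .
  have "(s^2) powr (-3/2) = s powr (- real 3)" unfolding e by (simp add: powr_powr)
  also have "\<dots> = 1/s^3" using assms by (simp only: powr_minus powr_realpow divide_inverse mult_1)
  finally show "(s^2) powr (-3/2) = 1/s^3" .
qed

lemma term_aux: fixes s G :: real
  assumes "G * (-4)^k = c"
  shows "G * (-(1-s^2))^k = c * ((1 - s^2)/4)^k"
proof -
  have e: "-(1-s^2) = (-4::real) * ((1-s^2)/4)" by simp
  have "G * (-(1-s^2))^k = G * ((-4) * ((1-s^2)/4))^k" by (simp only: e)
  also have "\<dots> = (G * (-4)^k) * ((1-s^2)/4)^k" by (simp only: power_mult_distrib mult.assoc)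
  finally show ?thesis by (simp only: assms)
qed

lemma L1:
  fixes s :: real assumes "0 < s" "s < 1"
  shows "(\<lambda>k. real ((2*k) choose k) * ((1 - s^2)/4)^k) sums (1/s)"
proof -
  have "s * s < 1" using assms mult_strict_mono[of s 1 s 1] by simp
  hence "\<bar>-(1-s^2)\<bar> < 1" using assms by (simp add: abs_if power2_eq_square)
  from gen_binomial_real[OF this, of "-1/2"]
  have "(\<lambda>k. ((-1/2) gchoose k) * (-(1-s^2))^k) sums ((1 + -(1-s^2)) powr (-1/2))" .
  moreover have "(1 + -(1-s^2)) = s^2" by simp
  moreover have "(\<lambda>k. ((-1/2::real) gchoose k) * (-(1-s^2))^k) = (\<lambda>k. real ((2*k) choose k) * ((1 - s^2)/4)^k)"
    by (rule ext, rule term_aux, rule gch_half)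
  ultimately show ?thesis using powr_half_aux(1)[OF assms(1)] by simp
qed

lemma L2:
  fixes s :: real assumes "0 < s" "s < 1"
  shows "(\<lambda>k. (2*real k+1) * real ((2*k) choose k) * ((1 - s^2)/4)^k) sums (1/s^3)"
proof -
  have "s * s < 1" using assms mult_strict_mono[of s 1 s 1] by simp
  hence "\<bar>-(1-s^2)\<bar> < 1" using assms by (simp add: abs_if power2_eq_square)
  from gen_binomial_real[OF this, of "-3/2"]
  have "(\<lambda>k. ((-3/2) gchoose k) * (-(1-s^2))^k) sums ((1 + -(1-s^2)) powr (-3/2))" .
  moreover have "(1 + -(1-s^2)) = s^2" by simp
  moreover have "(\<lambda>k. ((-3/2::real) gchoose k) * (-(1-s^2))^k) = (\<lambda>k. (2*real k+1) * real ((2*k) choose k) * ((1 - s^2)/4)^k)"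
    by (rule ext, rule term_aux, rule gch_3half)
  ultimately show ?thesis using powr_half_aux(2)[OF assms(1)] by simp
qed


lemma pascal2: "(Suc j + 2*Suc k) choose Suc k = ((Suc (Suc j) + 2*k) choose k) + ((j + 2*Suc k) choose Suc k)"
proof -
  have e1: "Suc j + 2*Suc k = Suc (Suc (Suc j) + 2*k)" by simp
  have e2: "j + 2*Suc k = Suc (Suc j) + 2*k" by simp
  show ?thesis unfolding e1 e2 by (rule binomial_Suc_Suc)
qed

lemma cb_Suc: "(2 * Suc k) choose Suc k = 2 * ((1 + 2*k) choose k)"
proof -
  have e: "2 * Suc k = Suc (Suc (2*k))" "1 + 2*k = Suc (2*k)" by simp_all
  have s: "Suc (2*k) choose Suc k = Suc (2*k) choose k"
    using binomial_symmetric[of "Suc k" "Suc (2*k)"] by simp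
  show ?thesis unfolding e binomial_Suc_Suc[of "Suc (2*k)" k] s by simp
qed

lemma sfacts: fixes s :: real assumes "0 < s" "s < 1"
  shows "1 - s \<noteq> 0" "1+s \<noteq> 0" "s \<noteq> 0" "1 - s^2 \<noteq> 0" "1 - s^2 > 0"
proof -
  have "s * s < 1" using assms mult_strict_mono[of s 1 s 1] by simp
  thus "1 - s \<noteq> 0" "1+s \<noteq> 0" "s \<noteq> 0" "1 - s^2 \<noteq> 0" "1 - s^2 > 0" using assms by (auto simp: power2_eq_square)
qed

lemma S_sums:
  fixes s :: real assumes s: "0 < s" "s < 1"
  shows "(\<lambda>k. real ((j + 2*k) choose k) * ((1 - s^2)/4)^k) sums ((2/(1+s))^j / s)"
proof -
  define z where "z = (1 - s^2)/4"
  have z: "z > 0" using s unfolding z_def by (simp add: power_less_one_iff)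
  define f where "f j k = real ((j + 2*k) choose k) * z^k" for j k
  have f0: "f i 0 = 1" for i by (simp add: f_def)
  have "f j sums ((2/(1+s))^j / s) \<and> f (Suc j) sums ((2/(1+s))^(Suc j) / s)"
  proof (induction j)
    case 0
    have h0: "f 0 sums (1/s)" unfolding f_def z_def using L1[OF s] by simp
    hence h0': "(\<lambda>k. f 0 (Suc k)) sums (1/s - 1)" by (subst sums_Suc_iff) (simp add: f0)
    have eq: "f 0 (Suc k) = (2*z) * f 1 k" for k
    proof -
      have c: "real ((0 + 2 * Suc k) choose Suc k) = 2 * real ((1 + 2 * k) choose k)"
        by (simp only: add_0 cb_Suc of_nat_mult of_nat_numeral)
      show ?thesis unfolding f_def c by simp
    qed
    have "(\<lambda>k. (2*z) * f 1 k) sums (1/s - 1)" using h0' by (simp only: eq)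
    hence "(\<lambda>k. (1/(2*z)) * ((2*z) * f 1 k)) sums ((1/(2*z)) * (1/s - 1))" by (rule sums_mult)
    hence "f 1 sums ((1/(2*z)) * (1/s - 1))" using z by simp
    moreover have "(1/(2*z)) * (1/s - 1) = (2/(1+s))^1 / s"
      using sfacts[OF s] unfolding z_def by (simp add: divide_simps) (simp add: algebra_simps power2_eq_square)
    ultimately show ?case using h0 by simp
  next
    case (Suc j)
    have a: "(\<lambda>k. f j (Suc k)) sums ((2/(1+s))^j / s - 1)" using Suc.IH
      by (subst sums_Suc_iff) (simp add: f0)
    have b: "(\<lambda>k. f (Suc j) (Suc k)) sums ((2/(1+s))^Suc j / s - 1)" using Suc.IH
      by (subst sums_Suc_iff) (simp add: f0)
    have "(\<lambda>k. f (Suc j) (Suc k) - f j (Suc k)) sums (((2/(1+s))^Suc j / s - 1) - ((2/(1+s))^j / s - 1))"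
      by (rule sums_diff[OF b a])
    moreover have "f (Suc j) (Suc k) - f j (Suc k) = z * f (Suc (Suc j)) k" for k
      unfolding f_def pascal2 by (simp add: algebra_simps)
    ultimately have "(\<lambda>k. z * f (Suc (Suc j)) k) sums ((2/(1+s))^Suc j / s - (2/(1+s))^j / s)" by simp
    hence "(\<lambda>k. (1/z) * (z * f (Suc (Suc j)) k)) sums ((1/z) * ((2/(1+s))^Suc j / s - (2/(1+s))^j / s))"
      by (rule sums_mult)
    hence "f (Suc (Suc j)) sums ((1/z) * ((2/(1+s))^Suc j / s - (2/(1+s))^j / s))" using z by simp
    moreover have "(1/z) * ((2/(1+s))^Suc j / s - (2/(1+s))^j / s) = (2/(1+s))^Suc (Suc j) / s"
    proof -
      have gen: "(1/z) * (X^Suc j / s - X^j / s) = (X^j / s) * ((X - 1)/z)" for X :: real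
        by (simp add: algebra_simps diff_divide_distrib)
      have "(1/z) * ((2/(1+s))^Suc j / s - (2/(1+s))^j / s) = ((2/(1+s))^j / s) * ((2/(1+s) - 1)/z)"
        by (rule gen)
      also have "(2/(1+s) - 1)/z = (2/(1+s))^2" using sfacts[OF s] unfolding z_def
        by (simp add: divide_simps) (simp add: algebra_simps power2_eq_square)
      also have "((2/(1+s))^j / s) * (2/(1+s))^2 = (2/(1+s))^Suc (Suc j) / s"
        by (metis power_add add_2_eq_Suc' times_divide_eq_left mult.commute)
      finally show ?thesis .
    qed
    ultimately show ?case using Suc.IH by simp
  qed
  thus ?thesis unfolding f_def z_def by simp
qed



lemma V_alg:
  fixes s t :: real assumes s: "0 < s" "s < 1"
  shows "(1/((1 - s^2)/4)) * ((2/(1+s)) * ((t+1)*((1+s)/(2* s^2)) + (1-s^2)/(2* s^3))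
      - (t*((1+s)/(2* s^2)) + (1-s^2)/(2* s^3)) - 1/s)
    = (2/(1+s))^2 * ((t+2)*((1+s)/(2* s^2)) + (1-s^2)/(2* s^3))"
  using sfacts[OF s] by (simp add: divide_simps) (simp add: algebra_simps eval_nat_numeral)

lemma V_sums:
  fixes s :: real assumes s: "0 < s" "s < 1"
  shows "(\<lambda>k. real (j + k) * real ((j + 2*k) choose k) * ((1 - s^2)/4)^k) sums
     ((2/(1+s))^j * (real j * ((1+s)/(2* s^2)) + (1-s^2)/(2* s^3)))"
proof -
  define z where "z = (1 - s^2)/4"
  have z: "z > 0" using sfacts[OF s] unfolding z_def by simp
  define f where "f j k = real ((j + 2*k) choose k) * z^k" for j k
  define g where "g j k = real (j + k) * real ((j + 2*k) choose k) * z^k" for j k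
  define V where "V j = (2/(1+s))^j * (real j * ((1+s)/(2* s^2)) + (1-s^2)/(2* s^3))" for j
  have fS: "f i sums ((2/(1+s))^i / s)" for i unfolding f_def z_def using S_sums[OF s] .
  have f0: "f i 0 = 1" for i by (simp add: f_def)
  have g0: "g i 0 = real i" for i by (simp add: g_def)
  have "g j sums V j \<and> g (Suc j) sums V (Suc j)"
  proof (induction j)
    case 0
    have l1: "(\<lambda>k. real ((2*k) choose k) * z^k) sums (1/s)" unfolding z_def using L1[OF s] .
    have l2: "(\<lambda>k. (2*real k+1) * real ((2*k) choose k) * z^k) sums (1/s^3)" unfolding z_def using L2[OF s] .
    have "(\<lambda>k. ((2*real k+1) * real ((2*k) choose k) * z^k - real ((2*k) choose k) * z^k) / 2) sums ((1/s^3 - 1/s)/2)"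
      by (intro sums_divide sums_diff l2 l1)
    moreover have "((2*real k+1) * real ((2*k) choose k) * z^k - real ((2*k) choose k) * z^k) / 2 = g 0 k" for k
      unfolding g_def by (simp add: algebra_simps)
    moreover have "(1/s^3 - 1/s)/2 = V 0" unfolding V_def using sfacts[OF s]
      by (simp add: divide_simps) (simp add: algebra_simps eval_nat_numeral)
    ultimately have h0: "g 0 sums V 0" by simp
    hence h0': "(\<lambda>k. g 0 (Suc k)) sums (V 0)" by (subst sums_Suc_iff) (simp add: g0)
    have eq: "g 0 (Suc k) = (2*z) * g 1 k" for k
    proof -
      have c: "real ((0 + 2 * Suc k) choose Suc k) = 2 * real ((1 + 2 * k) choose k)"
        by (simp only: add_0 cb_Suc of_nat_mult of_nat_numeral)
      show ?thesis unfolding g_def c by simp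
    qed
    have "(\<lambda>k. (2*z) * g 1 k) sums (V 0)" using h0' by (simp only: eq)
    hence "(\<lambda>k. (1/(2*z)) * ((2*z) * g 1 k)) sums ((1/(2*z)) * V 0)" by (rule sums_mult)
    hence "g 1 sums ((1/(2*z)) * V 0)" using z by simp
    moreover have "(1/(2*z)) * V 0 = V 1" unfolding V_def z_def
      using sfacts[OF s] by (simp add: divide_simps) (simp add: algebra_simps eval_nat_numeral)
    ultimately show ?case using h0 by simp
  next
    case (Suc j)
    have a: "(\<lambda>k. g j (Suc k)) sums (V j - real j)" using Suc.IH
      by (subst sums_Suc_iff) (simp add: g0)
    have b: "(\<lambda>k. g (Suc j) (Suc k)) sums (V (Suc j) - real (Suc j))" using Suc.IH
      by (subst sums_Suc_iff) (simp add: g0)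
    have c: "(\<lambda>k. f j (Suc k)) sums ((2/(1+s))^j / s - 1)" using fS[of j]
      by (subst sums_Suc_iff) (simp add: f0)
    have "(\<lambda>k. g (Suc j) (Suc k) - g j (Suc k) - f j (Suc k)) sums
        ((V (Suc j) - real (Suc j)) - (V j - real j) - ((2/(1+s))^j / s - 1))"
      by (intro sums_diff a b c)
    moreover have "g (Suc j) (Suc k) - g j (Suc k) - f j (Suc k) = z * g (Suc (Suc j)) k" for k
      unfolding g_def f_def pascal2 by (simp add: algebra_simps)
    ultimately have "(\<lambda>k. z * g (Suc (Suc j)) k) sums (V (Suc j) - V j - (2/(1+s))^j / s)" by (simp add: algebra_simps)
    hence "(\<lambda>k. (1/z) * (z * g (Suc (Suc j)) k)) sums ((1/z) * (V (Suc j) - V j - (2/(1+s))^j / s))"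
      by (rule sums_mult)
    hence "g (Suc (Suc j)) sums ((1/z) * (V (Suc j) - V j - (2/(1+s))^j / s))" using z by simp
    moreover have "(1/z) * (V (Suc j) - V j - (2/(1+s))^j / s) = V (Suc (Suc j))"
    proof -
      define X where "X = 2/(1+s)"
      define A where "A = (1+s)/(2* s^2)"
      define B where "B = (1-s^2)/(2* s^3)"
      have "(1/z) * (V (Suc j) - V j - X^j / s) = X^j * ((1/z) * (X * ((real j+1)*A + B) - (real j*A + B) - 1/s))"
        unfolding V_def X_def[symmetric] A_def[symmetric] B_def[symmetric]
        by (simp add: algebra_simps diff_divide_distrib)
      also have "(1/z) * (X * ((real j+1)*A + B) - (real j*A + B) - 1/s) = X^2 * ((real j+2)*A+B)"
        unfolding X_def A_def B_def z_def by (rule V_alg[OF s])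
      also have "X^j * (X^2 * ((real j+2)*A+B)) = V (Suc (Suc j))"
        unfolding V_def X_def[symmetric] A_def[symmetric] B_def[symmetric]
        by (simp add: power_add[symmetric] add_2_eq_Suc' mult.assoc power2_eq_square algebra_simps)
      finally show ?thesis unfolding X_def .
    qed
    ultimately show ?case using Suc.IH by simp
  qed
  thus ?thesis unfolding g_def z_def V_def by simp
qed



lemma exp_sums_real: "(\<lambda>n. x^n / fact n) sums exp (x::real)"
  using exp_converges[of x] by (simp add: real_scaleR_def divide_inverse mult.commute)

lemma exp_sums_n: "(\<lambda>n. real n * (x^n / fact n)) sums (x * exp (x::real))"
proof -
  have "(\<lambda>n. x * (x^n / fact n)) sums (x * exp x)" by (rule sums_mult[OF exp_sums_real])
  moreover have "x * (x^n / fact n) = real (Suc n) * (x^(Suc n) / fact (Suc n))" for n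
    by (simp add: fact_Suc field_simps del: of_nat_Suc)
  ultimately have "(\<lambda>n. real (Suc n) * (x^(Suc n) / fact (Suc n))) sums (x * exp x)" by simp
  thus ?thesis by (subst (asm) sums_Suc_iff) simp
qed

lemma nat_bound: "(j+k) * ((j+2*k) choose k) \<le> 4^j * 8^k"
proof -
  have "j + k < 2^(j+k)" by (rule less_exp)
  moreover have "(j+2*k) choose k \<le> 2^(j+2*k)" by (rule binomial_le_pow2)
  ultimately have "(j+k) * ((j+2*k) choose k) \<le> 2^(j+k) * 2^(j+2*k)" by (intro mult_le_mono) auto
  also have "(2::nat)^(j+k) * 2^(j+2*k) = 2^(2*j+3*k)"
  proof -
    have e: "2*j+3*k = (j+k)+(j+2*k)" by simp
    show ?thesis by (simp only: e power_add)
  qed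
  also have "(2::nat)^(2*j+3*k) = 4^j * 8^k" by (simp add: power_add power_mult)
  finally show ?thesis .
qed

lemma term_eq:
  fixes b y :: real
  assumes "b \<noteq> 0" "y \<noteq> 0" "t + 1 = jj + 2*k"
  shows "real ((t+1) choose k) * (real (t+1-k) / fact (t+1-2*k)) * b powi (int t - 2*int k) * y^t
    = (b*y)^jj / fact jj * (real (jj+k) * real ((jj+2*k) choose k) * (y^2)^k) / (b*y)"
proof -
  have e1: "t+1-k = jj+k" "t+1-2*k = jj" using assms(3) by simp_all
  have e2: "int t - 2*int k = int jj - 1" using assms(3) by linarith
  have e3: "b powi (int jj - 1) = b^jj / b" using assms(1) by (simp add: power_int_diff)
  have e4: "y^t = y^jj * (y^2)^k / y"
  proof -
    have "y^t * y = y^(t+1)" by simp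
    also have "\<dots> = y^jj * (y^2)^k" unfolding assms(3) by (simp add: power_add power_mult)
    finally show ?thesis using assms(2) by (simp add: field_simps)
  qed
  show ?thesis unfolding e1 e2 e3 e4 assms(3) using assms(1,2)
    by (simp add: field_simps power_mult_distrib)
qed

lemma FM_lemma:
  fixes c z :: real assumes z0: "z > 0"
  shows "norm (c^j / fact j * (real (j+k) * real ((j+2*k) choose k) * z^k)) \<le> (4 * \<bar>c\<bar>)^j / fact j * (8*z)^k"
proof -
  have nb0: "real ((j+k) * ((j+2*k) choose k)) \<le> real ((4::nat)^j * 8^k)"
    using nat_bound[of j k] by (simp only: of_nat_le_iff)
  hence nb: "real (j+k) * real ((j+2*k) choose k) \<le> 4^j * 8^k"
    by (simp only: of_nat_mult of_nat_power of_nat_numeral)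
  have nn: "\<bar>c\<bar>^j / fact j * z^k \<ge> 0" using z0 by simp
  have "norm (c^j / fact j * (real (j+k) * real ((j+2*k) choose k) * z^k)) = (\<bar>c\<bar>^j / fact j * z^k) * (real (j+k) * real ((j+2*k) choose k))"
    using z0 by (simp add: abs_mult power_abs)
  also have "\<dots> \<le> (\<bar>c\<bar>^j / fact j * z^k) * (4^j * 8^k)" by (rule mult_left_mono[OF nb nn])
  also have "\<dots> = (4 * \<bar>c\<bar>)^j / fact j * (8*z)^k" by (simp add: power_mult_distrib)
  finally show ?thesis .
qed



theorem mainTheorem5:
  fixes n :: nat
  assumes "n \<ge> 1"
  shows "summable (\<lambda>t. gcoef t / real n powr (real t / 2)) \<and>
    sqrt 12 * exp (mu n) / (24 * real n - 1) * (1 - 1 / mu n) =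
    exp (pi * sqrt (2 * real n / 3)) / (4 * real n * sqrt 3) *
      (\<Sum>t. gcoef t / real n powr (real t / 2))"
proof -
  define b :: real where "b = pi / 6"
  define r :: real where "r = sqrt (24 * real n)"
  define s :: real where "s = sqrt (24 * real n - 1) / r"
  define y :: real where "y = - 1 / (2 * r)"
  define z :: real where "z = y^2"
  define X :: real where "X = 2 / (1 + s)"
  define Aco :: real where "Aco = (1+s)/(2* s^2)"
  define Bco :: real where "Bco = (1-s^2)/(2* s^3)"
  define u :: real where "u = b * y * X"
  have n1: "real n \<ge> 1" using assms by simp
  have b0: "b > 0" unfolding b_def by simp
  have r0: "r > 0" unfolding r_def using n1 by simp
  have r2: "r^2 = 24 * real n" unfolding r_def using n1 by simp
  have q0: "sqrt (24 * real n - 1) > 0" using n1 by simp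
  have q2: "(sqrt (24 * real n - 1))^2 = 24 * real n - 1" using n1 by simp
  have s0: "s > 0" unfolding s_def using q0 r0 by simp
  have rs: "r * s = sqrt (24 * real n - 1)" unfolding s_def using r0 by simp
  have rs2: "r^2 * s^2 = 24 * real n - 1" using rs q2 by (simp add: power_mult_distrib[symmetric])
  have s1: "s < 1"
  proof -
    have "sqrt (24 * real n - 1) < r" unfolding r_def by simp
    thus ?thesis unfolding s_def using r0 by simp
  qed
  have s_facts: "1 - s^2 = 1 / r^2"
  proof -
    have "r^2 * (1 - s^2) = 1" using rs2 r2 by (simp add: algebra_simps)
    thus ?thesis using r0 by (simp add: eq_divide_eq mult.commute)
  qed
  have y0: "y \<noteq> 0" unfolding y_def using r0 by simp
  have z_eq: "z = (1 - s^2)/4" unfolding z_def y_def s_facts using r0 by (simp add: field_simps power2_eq_square)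
  have z0: "z > 0" unfolding z_def using y0 by simp
  define F :: "nat \<Rightarrow> nat \<Rightarrow> real" where
    "F j k = (b*y)^j / fact j * (real (j+k) * real ((j+2*k) choose k) * z^k)" for j k
  define innerv where "innerv j = (b*y)^j / fact j * (X^j * (real j * Aco + Bco))" for j
  have inner_sums: "(\<lambda>k. F j k) sums innerv j" for j
  proof -
    have "(\<lambda>k. real (j + k) * real ((j + 2*k) choose k) * ((1 - s^2)/4)^k) sums
       ((2/(1+s))^j * (real j * ((1+s)/(2* s^2)) + (1-s^2)/(2* s^3)))" by (rule V_sums[OF s0 s1])
    hence "(\<lambda>k. real (j + k) * real ((j + 2*k) choose k) * z^k) sums (X^j * (real j * Aco + Bco))"
      unfolding z_eq X_def Aco_def Bco_def .
    from sums_mult[OF this, of "(b*y)^j / fact j"] show ?thesis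
      unfolding F_def innerv_def .
  qed
  define M where "M j k = (4 * \<bar>b*y\<bar>)^j / fact j * (8*z)^k" for j k
  have FM: "norm (F j k) \<le> M j k" for j k
    unfolding F_def M_def by (rule FM_lemma[OF z0])
  have M0: "M j k \<ge> 0" for j k unfolding M_def using z0 by simp
  have z8: "8 * z < 1"
  proof -
    have e: "8 * z = 2 / r^2" unfolding z_eq s_facts by simp
    have "r^2 > 2" using r2 n1 by simp
    thus ?thesis unfolding e by (simp add: divide_less_eq)
  qed
  have Msum: "(\<lambda>(j,k). M j k) summable_on UNIV \<times> UNIV"
  proof (rule summable_on_SigmaI[where g="\<lambda>j. (4 * \<bar>b*y\<bar>)^j / fact j * (1/(1 - 8*z))"])
    fix j :: nat assume "j \<in> UNIV"
    have "(\<lambda>k. (8*z)^k) sums (1/(1-8*z))" using geometric_sums[of "8*z"] z0 z8 by simp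
    from sums_mult[OF this, of "(4 * \<bar>b*y\<bar>)^j / fact j"]
    have "(\<lambda>k. M j k) sums ((4 * \<bar>b*y\<bar>)^j / fact j * (1/(1 - 8*z)))" unfolding M_def .
    hence "((\<lambda>k. M j k) has_sum ((4 * \<bar>b*y\<bar>)^j / fact j * (1/(1 - 8*z)))) UNIV"
      by (rule sums_nonneg_imp_has_sum) (rule M0)
    thus "((\<lambda>k. (\<lambda>(j,k). M j k) (j, k)) has_sum ((4 * \<bar>b*y\<bar>)^j / fact j * (1/(1 - 8*z)))) UNIV"
      by simp
  next
    have "(\<lambda>j. (4 * \<bar>b*y\<bar>)^j / fact j * (1/(1 - 8*z))) sums (exp (4 * \<bar>b*y\<bar>) * (1/(1 - 8*z)))"
      by (rule sums_mult2[OF exp_sums_real])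
    hence "summable (\<lambda>j. (4 * \<bar>b*y\<bar>)^j / fact j * (1/(1 - 8*z)))" by (rule sums_summable)
    moreover have "(4 * \<bar>b*y\<bar>)^j / fact j * (1/(1 - 8*z)) \<ge> 0" for j using z8 by simp
    ultimately show "(\<lambda>j. (4 * \<bar>b*y\<bar>)^j / fact j * (1/(1 - 8*z))) summable_on UNIV"
      by (subst summable_on_UNIV_nonneg_real_iff) auto
  next
    fix j k :: nat
    show "0 \<le> (\<lambda>(j,k). M j k) (j, k)" using M0 by simp
  qed
  have Fsum: "(\<lambda>(j,k). F j k) summable_on UNIV \<times> UNIV"
  proof -
    have "(\<lambda>x. norm ((\<lambda>(j,k). M j k) x)) summable_on UNIV \<times> UNIV"
      using Msum summable_on_iff_abs_summable_on_real by blast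
    hence "(\<lambda>x. norm ((\<lambda>(j,k). F j k) x)) summable_on UNIV \<times> UNIV"
      by (rule Infinite_Sum.abs_summable_on_comparison_test) (use FM M0 in auto)
    thus ?thesis using summable_on_iff_abs_summable_on_real by blast
  qed
  have inner_has: "((\<lambda>k. F j k) has_sum innerv j) UNIV" for j
  proof -
    have "F j summable_on UNIV" using summable_on_SigmaD1[OF Fsum, of j] by simp
    hence h: "(F j has_sum infsum (F j) UNIV) UNIV" by (rule has_sum_infsum)
    hence "F j sums infsum (F j) UNIV" by (rule has_sum_imp_sums)
    hence "infsum (F j) UNIV = innerv j" using inner_sums[of j] by (simp add: sums_iff)
    thus ?thesis using h by simp
  qed
  define Tot where "Tot = infsum (\<lambda>(j,k). F j k) (UNIV \<times> UNIV)"
  have Tot_has: "((\<lambda>(j,k). F j k) has_sum Tot) (UNIV \<times> UNIV)"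
    unfolding Tot_def by (rule has_sum_infsum[OF Fsum])
  have "(innerv has_sum Tot) UNIV"
    by (rule has_sum_Sigma'[OF Tot_has]) (use inner_has in simp)
  hence innerv_Tot: "innerv sums Tot" by (rule has_sum_imp_sums)
  have "(\<lambda>j. Aco * (real j * (u^j / fact j)) + Bco * (u^j / fact j)) sums (Aco * (u * exp u) + Bco * exp u)"
    by (intro sums_add sums_mult exp_sums_n exp_sums_real)
  moreover have "Aco * (real j * (u^j / fact j)) + Bco * (u^j / fact j) = innerv j" for j
    unfolding innerv_def u_def by (simp add: power_mult_distrib algebra_simps)
  ultimately have "innerv sums (Aco * (u * exp u) + Bco * exp u)" by simp
  hence Tot_val: "Tot = Aco * (u * exp u) + Bco * exp u" using innerv_Tot sums_unique2 by blast
  define G where "G m = (\<Sum>k\<le>m div 2. F (m - 2*k) k)" for m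
  have "((\<lambda>(m,k). F (m - 2*k) k) has_sum Tot) (Sigma UNIV (\<lambda>m. {..m div 2}))"
  proof -
    have "((\<lambda>(j,k). F j k) has_sum Tot) (UNIV \<times> UNIV) = ((\<lambda>(m,k). F (m - 2*k) k) has_sum Tot) (Sigma UNIV (\<lambda>m. {..m div 2}))"
      by (rule has_sum_reindex_bij_witness[where j="\<lambda>(a,k). (a + 2*k, k)" and i="\<lambda>(m,k). (m - 2*k, k)"])
         auto
    thus ?thesis using Tot_has by simp
  qed
  hence "(G has_sum Tot) UNIV"
    by (rule has_sum_Sigma') (auto simp: G_def)
  hence "G sums Tot" by (rule has_sum_imp_sums)
  moreover have "G 0 = 0" unfolding G_def F_def by simp
  ultimately have "(\<lambda>t. G (Suc t)) sums Tot" by (subst sums_Suc_iff) simp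
  hence Gsums: "(\<lambda>t. G (Suc t) / (b*y)) sums (Tot / (b*y))" by (rule sums_divide)
  have termeq: "gcoef t / real n powr (real t / 2) = G (Suc t) / (b*y)" for t
  proof -
    have p: "real n powr (real t / 2) = sqrt (real n) ^ t"
    proof -
      have "real n powr (real t / 2) = (real n powr (1/2)) powr real t" by (simp add: powr_powr)
      also have "\<dots> = sqrt (real n) ^ t" using n1 by (simp add: powr_half_sqrt powr_realpow)
      finally show ?thesis .
    qed
    have yv: "1 / (- 4 * sqrt 6) ^ t / sqrt (real n) ^ t = y^t"
    proof -
      have "r = 2 * sqrt 6 * sqrt (real n)"
      proof -
        have "sqrt (24 * real n) = sqrt ((4 * 6) * real n)" by simp
        also have "\<dots> = sqrt 4 * sqrt 6 * sqrt (real n)" by (simp only: real_sqrt_mult)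
        also have "\<dots> = 2 * sqrt 6 * sqrt (real n)" by simp
        finally show ?thesis unfolding r_def .
      qed
      hence yy: "y = 1 / ((- 4 * sqrt 6) * sqrt (real n))" unfolding y_def by simp
      have g: "1 / a^t / c^t = (1/(a*c))^t" for a c :: real
        by (simp add: power_divide power_mult_distrib)
      show ?thesis unfolding yy by (rule g)
    qed
    have "gcoef t / real n powr (real t / 2) =
       (\<Sum>k = 0..(t + 1) div 2. real ((t + 1) choose k) * (real (t + 1 - k) / fact (t + 1 - 2 * k)) * b powi (int t - 2 * int k) * y^t)"
      unfolding gcoef_def p b_def[symmetric] sum_distrib_right[symmetric] yv[symmetric] by simp
    also have "\<dots> = (\<Sum>k\<le>Suc t div 2. F (Suc t - 2*k) k / (b*y))"
    proof (rule sum.cong)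
      show "{0..(t + 1) div 2} = {..Suc t div 2}" by auto
    next
      fix k assume "k \<in> {..Suc t div 2}"
      hence "t + 1 = (Suc t - 2*k) + 2*k" by auto
      from term_eq[OF _ y0 this, of b] b0
      show "real ((t + 1) choose k) * (real (t + 1 - k) / fact (t + 1 - 2 * k)) * b powi (int t - 2 * int k) * y^t
         = F (Suc t - 2*k) k / (b*y)" unfolding F_def z_def by simp
    qed
    also have "\<dots> = G (Suc t) / (b*y)" unfolding G_def by (simp add: sum_divide_distrib)
    finally show ?thesis .
  qed
  have main_sums: "(\<lambda>t. gcoef t / real n powr (real t / 2)) sums (Tot / (b*y))"
    using Gsums by (simp only: termeq)
  have mu_eq: "mu n = b * r * s" unfolding mu_def b_def rs[symmetric] by simp
  have sq: "pi * sqrt (2 * real n / 3) = b * r"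
  proof -
    have "sqrt (2 * real n / 3) = r / 6" using r2 r0 by (intro real_sqrt_unique) (simp_all add: power_divide)
    thus ?thesis unfolding b_def by simp
  qed
  have expu: "exp (b * r * s) = exp (b * r) * exp u"
  proof -
    have "b * r * s = b * r + u"
    proof -
      have h1: "r^2 * (1 - s^2) = 1" using s_facts r0 by simp
      have h2: "r^2 * (s - 1) * (1 + s) = - (r^2 * (1 - s^2))" by (simp add: algebra_simps power2_eq_square)
      have "r^2 * (s - 1) * (1 + s) = -1" unfolding h2 h1 by simp
      hence hh: "r * (s - 1) * (r * (1+s)) = -1" by (simp add: power2_eq_square mult_ac)
      have nz: "r * (1+s) \<noteq> 0" "1 + s \<noteq> 0" "r \<noteq> 0" using r0 s0 by auto
      have hr: "r * (s - 1) = -1 / (r * (1+s))" using hh nz by (subst eq_divide_eq) simp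
      have hu: "u = b * (-1 / (r * (1+s)))" unfolding u_def y_def X_def using nz by (simp add: field_simps)
      show ?thesis unfolding hu hr[symmetric] by (simp add: algebra_simps)
    qed
    thus ?thesis by (simp add: exp_add)
  qed
  have n4: "24 * real n - 1 = r^2 * s^2" using rs2 by simp
  have n5: "4 * real n = r^2 / 6" using r2 by simp
  have sq12: "sqrt 12 = 2 * sqrt 3"
  proof -
    have "sqrt 12 = sqrt (4 * 3)" by simp
    also have "\<dots> = 2 * sqrt 3" by (simp only: real_sqrt_mult) simp
    finally show ?thesis .
  qed
  have s3: "sqrt 3 * sqrt 3 = (3::real)" by simp
  have s30: "sqrt 3 > (0::real)" by simp
  have Bco_eq: "Bco = 1 / (2 * r^2 * s^3)" unfolding Bco_def s_facts by simp
  have nz2: "1 + s \<noteq> 0" "r \<noteq> 0" "s \<noteq> 0" "b \<noteq> 0" using r0 s0 b0 by auto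
  have hu2: "u = - b / (r * (1+s))" unfolding u_def y_def X_def using nz2 by (simp add: field_simps)
  have stepA: "Tot / (b*y) = exp u * ((Aco*u + Bco)/(b*y))" unfolding Tot_val by (simp add: algebra_simps add_divide_distrib)
  have stepB: "(Aco*u + Bco)/(b*y) = 1/s^2 - 1/(b*r* s^3)"
  proof -
    have au: "Aco * u = - b / (2 * r * s^2)" unfolding Aco_def hu2 using nz2
      by (simp add: divide_simps; simp add: algebra_simps eval_nat_numeral)
    show ?thesis unfolding au Bco_eq y_def using nz2
      by (simp add: divide_simps; simp add: algebra_simps eval_nat_numeral)
  qed
  have q6: "2 * sqrt 3 = 6 / sqrt (3::real)" using s3 s30 by (simp add: field_simps)
  have final: "sqrt 12 * exp (mu n) / (24 * real n - 1) * (1 - 1 / mu n) =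
    exp (pi * sqrt (2 * real n / 3)) / (4 * real n * sqrt 3) * (Tot / (b*y))"
  proof -
    have "sqrt 12 * exp (mu n) / (24 * real n - 1) * (1 - 1 / mu n) =
        6 / sqrt 3 * (exp (b*r) * exp u) / (r^2 * s^2) * (1 - 1/(b*r* s))"
      unfolding mu_eq n4 sq12 q6 expu ..
    also have "\<dots> = exp (b*r) / (r^2 / 6 * sqrt 3) * (exp u * (1/s^2 - 1/(b*r* s^3)))"
      using nz2 s30 by (simp add: divide_simps; simp add: algebra_simps eval_nat_numeral)
    also have "\<dots> = exp (pi * sqrt (2 * real n / 3)) / (4 * real n * sqrt 3) * (Tot / (b*y))"
      unfolding sq n5 stepA stepB ..
    finally show ?thesis .
  qed
  show ?thesis using main_sums final by (simp add: sums_iff)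
qed


end
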